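(* Let $p\ne17$ be an odd prime. Then $$\Big(\frac2p\Big)\sum_{k=0}^{[p/4]}\binom{4k}{2k}\frac1{272^k}\equiv\begin{cases}1\pmod p&\text{if }p\equiv\pm1,\pm4\pmod{17},\\-1\pmod p&\text{if }p\equiv\pm2,\pm8\pmod{17},\\ \frac14\pmod p&\text{if }p\equiv\pm6,\pm7\pmod{17},\\-\frac14\pmod p&\text{if }p\equiv\pm3,\pm5\pmod{17}.\end{cases}$$
   Context: $[x]$ is the greatest integer $\le x$; $(\frac2p)$ is the Legendre symbol. *)

theory Defs
  imports "HOL-Number_Theory.Number_Theory"
begin

end

theory Submission
  imports Defs "HOL-Computational_Algebra.Polynomial"
begin


definition Phi :: "int poly" where "Phi = [:1,1,1,1,1,1,1,1,1,1,1,1,1,1,1,1,1:]"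

definition inI :: "nat \<Rightarrow> int poly \<Rightarrow> bool" where
  "inI p D \<longleftrightarrow> (\<exists>Q R. D = smult (int p) Q + Phi * R)"

definition cg :: "nat \<Rightarrow> int poly \<Rightarrow> int poly \<Rightarrow> bool" where
  "cg p A B \<longleftrightarrow> inI p (A - B)"

lemma inI_add: assumes "inI p A" "inI p B" shows "inI p (A + B)"
proof -
  obtain Q R Q' R' where "A = smult (int p) Q + Phi * R" "B = smult (int p) Q' + Phi * R'"
    using assms unfolding inI_def by blast
  then have "A + B = smult (int p) (Q + Q') + Phi * (R + R')"
    by (simp add: algebra_simps smult_add_right)
  then show ?thesis unfolding inI_def by blast
qed

lemma inI_mult: assumes "inI p A" shows "inI p (A * B)"
proof -
  obtain Q R where "A = smult (int p) Q + Phi * R"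
    using assms unfolding inI_def by blast
  then have "A * B = smult (int p) (Q * B) + Phi * (R * B)"
    by (simp add: algebra_simps)
  then show ?thesis unfolding inI_def by blast
qed

lemma inI_uminus: assumes "inI p A" shows "inI p (- A)"
  using inI_mult[OF assms, of "-1"] by simp

lemma inI_smult_p: "inI p (smult (int p) Q)"
  unfolding inI_def by (rule exI[of _ Q], rule exI[of _ 0], simp)

lemma inI_Phi: "inI p (Phi * R)"
  unfolding inI_def by (rule exI[of _ 0], rule exI[of _ R], simp)

lemma inI_0: "inI p 0"
  using inI_Phi[of p 0] by simp

lemma cg_refl: "cg p A A" unfolding cg_def using inI_0 by simp
lemma cg_eq: "A = B \<Longrightarrow> cg p A B" using cg_refl by simp
lemma cg_sym: assumes "cg p A B" shows "cg p B A"
proof -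
  have "B - A = - (A - B)" by simp
  then show ?thesis using assms inI_uminus unfolding cg_def by metis
qed
lemma cg_trans[trans]: assumes "cg p A B" "cg p B C" shows "cg p A C"
proof -
  have "A - C = (A - B) + (B - C)" by simp
  then show ?thesis using assms inI_add unfolding cg_def by metis
qed
lemma cg_add: assumes "cg p A B" "cg p C D" shows "cg p (A + C) (B + D)"
proof -
  have "(A + C) - (B + D) = (A - B) + (C - D)" by simp
  then show ?thesis using assms inI_add unfolding cg_def by metis
qed
lemma cg_diff: assumes "cg p A B" "cg p C D" shows "cg p (A - C) (B - D)"
proof -
  have "(A - C) - (B - D) = (A - B) + - (C - D)" by simp
  then show ?thesis using assms inI_add inI_uminus unfolding cg_def by metis
qed
lemma cg_mult: assumes "cg p A B" "cg p C D" shows "cg p (A * C) (B * D)"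
proof -
  have "A * C - B * D = (A - B) * C + (C - D) * B" by (simp add: algebra_simps)
  then show ?thesis using assms unfolding cg_def by (metis inI_add inI_mult)
qed
lemma cg_power: "cg p A B \<Longrightarrow> cg p (A ^ n) (B ^ n)"
  by (induction n) (auto intro: cg_mult cg_refl)
lemma cg_sum: "finite S \<Longrightarrow> (\<And>i. i \<in> S \<Longrightarrow> cg p (f i) (g i)) \<Longrightarrow> cg p (sum f S) (sum g S)"
  by (induction S rule: finite_induct) (auto intro: cg_add cg_refl)
lemma cg_smult_p: "cg p (A + smult (int p) Q) A"
  unfolding cg_def using inI_smult_p by simp

lemma fresh2:
  fixes a b :: "'a::comm_ring_1"
  assumes p: "prime p"
  shows "\<exists>C. (a + b) ^ p = a ^ p + b ^ p + of_nat p * C"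
proof -
  have p0: "p > 0" using p prime_gt_0_nat by blast
  define f where "f = (\<lambda>k. of_nat (p choose k) * a ^ k * b ^ (p - k))"
  have e: "{..p} = insert 0 (insert p {1..<p})" using p0 by auto
  have "(a + b) ^ p = (\<Sum>k\<le>p. f k)" unfolding f_def by (rule binomial_ring)
  also have "\<dots> = f 0 + (f p + (\<Sum>k\<in>{1..<p}. f k))" unfolding e using p0 by simp
  also have "(\<Sum>k\<in>{1..<p}. f k) = of_nat p * (\<Sum>k\<in>{1..<p}. of_nat ((p choose k) div p) * a ^ k * b ^ (p - k))"
  proof -
    have "f k = of_nat p * (of_nat ((p choose k) div p) * a ^ k * b ^ (p - k))" if "k \<in> {1..<p}" for k
    proof -
      from that have "p dvd (p choose k)" using dvd_choose_prime p by auto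
      then have "(p choose k) = p * ((p choose k) div p)" by simp
      then have "(of_nat (p choose k) :: 'a) = of_nat p * of_nat ((p choose k) div p)"
        by (metis of_nat_mult)
      then show ?thesis unfolding f_def by (simp add: mult.assoc)
    qed
    then show ?thesis by (simp add: sum_distrib_left)
  qed
  finally have "(a + b) ^ p = a ^ p + b ^ p + of_nat p * (\<Sum>k\<in>{1..<p}. of_nat ((p choose k) div p) * a ^ k * b ^ (p - k))"
    unfolding f_def using p0 by (simp add: algebra_simps)
  then show ?thesis by blast
qed

lemma fresh_sum:
  fixes f :: "'b \<Rightarrow> 'a::comm_ring_1"
  assumes p: "prime p" and S: "finite S"
  shows "\<exists>C. (sum f S) ^ p = (\<Sum>i\<in>S. f i ^ p) + of_nat p * C"
  using S
proof (induction S rule: finite_induct)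
  case empty
  have "p > 0" using p prime_gt_0_nat by blast
  then have "(sum f {}) ^ p = (\<Sum>i\<in>{}. f i ^ p) + of_nat p * 0" by (simp add: zero_power)
  then show ?case by blast
next
  case (insert x F)
  obtain C1 where C1: "(sum f F) ^ p = (\<Sum>i\<in>F. f i ^ p) + of_nat p * C1" using insert by blast
  obtain C2 where C2: "(f x + sum f F) ^ p = f x ^ p + (sum f F) ^ p + of_nat p * C2"
    using fresh2[OF p] by blast
  have "(sum f (insert x F)) ^ p = (\<Sum>i\<in>insert x F. f i ^ p) + of_nat p * (C1 + C2)"
    using insert C1 C2 by (simp add: algebra_simps)
  then show ?case by blast
qed

lemma poly_eq_coeffsI: "coeffs A = coeffs B \<Longrightarrow> A = B"
  by (simp add: coeffs_eq_iff)

lemma ofnat_mult_poly: "(of_nat p :: int poly) * C = smult (int p) C"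
  by (simp add: of_nat_poly)

lemma x17: "cg p (monom 1 17) 1"
proof -
  have m: "(monom 1 17 :: int poly) = [:0,1:]^17" by (simp add: monom_altdef)
  have "coeffs ([:0,1:]^17 - 1 :: int poly) = coeffs ([:1,1,1,1,1,1,1,1,1,1,1,1,1,1,1,1,1:] * [:-1, 1:])"
    by code_simp
  then have e: "monom 1 17 - 1 = Phi * [:-1, 1:]"
    unfolding m Phi_def by (rule poly_eq_coeffsI)
  show ?thesis unfolding cg_def e by (rule inI_Phi)
qed

lemma monom_red: "cg p (monom c m) (monom c (m mod 17))"
proof -
  have "monom c m = monom c (m mod 17) * (monom 1 17) ^ (m div 17)"
    by (simp add: monom_power mult_monom)
  also have "cg p \<dots> (monom c (m mod 17) * 1 ^ (m div 17))"
    by (intro cg_mult cg_refl cg_power x17)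
  finally show ?thesis by simp
qed

lemma coeff_pow_self:
  assumes "c \<in> {-1, 0, 1::int}" "odd p"
  shows "c ^ p = c"
proof -
  have "p > 0" using assms by (intro odd_pos)
  then show ?thesis using assms by (auto simp: zero_power)
qed

lemma frob:
  assumes p: "prime p" "odd p" and cf0: "set (coeffs A) \<subseteq> {-1, 0, 1}" and dg: "degree A < 17"
  shows "cg p (A ^ p) (\<Sum>j<17. monom (coeff A j) ((j * (p mod 17)) mod 17))"
proof -
  have cf: "coeff A j \<in> {-1,0,1}" for j
  proof -
    have "coeff A j = nth_default 0 (coeffs A) j" by (simp add: nth_default_coeffs_eq)
    then show ?thesis using cf0 by (auto simp: nth_default_def dest: nth_mem)
  qed
  have "(\<Sum>j<17. monom (coeff A j) j) = (\<Sum>j\<le>degree A. monom (coeff A j) j)"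
    using dg by (intro sum.mono_neutral_right) (auto simp: coeff_eq_0)
  then have A: "A = (\<Sum>j<17. monom (coeff A j) j)" by (simp add: poly_as_sum_of_monoms)
  obtain C where C: "(\<Sum>j<17. monom (coeff A j) j) ^ p = (\<Sum>j<17. (monom (coeff A j) j) ^ p) + of_nat p * C"
    using fresh_sum[OF p(1), of "{..<17::nat}" "\<lambda>j. monom (coeff A j) j"] by auto
  have "(monom (coeff A j) j) ^ p = monom (coeff A j) (j * p)" for j
    using coeff_pow_self[OF _ p(2), of "coeff A j"] cf by (simp add: monom_power)
  then have "A ^ p = (\<Sum>j<17. monom (coeff A j) (j * p)) + smult (int p) C"
    using C A by (simp add: ofnat_mult_poly)
  then have "cg p (A ^ p) (\<Sum>j<17. monom (coeff A j) (j * p))"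
    using cg_smult_p by simp
  also have "cg p \<dots> (\<Sum>j<17. monom (coeff A j) ((j * p) mod 17))"
    by (intro cg_sum monom_red) auto
  also have "(\<Sum>j<17. monom (coeff A j) ((j * p) mod 17)) = (\<Sum>j<17. monom (coeff A j) ((j * (p mod 17)) mod 17))"
    by (simp add: mod_mult_right_eq)
  finally show ?thesis .
qed

lemma Phi_deg: "degree Phi = 16" unfolding Phi_def by code_simp
lemma Phi_lc: "coeff Phi 16 = 1" unfolding Phi_def by code_simp
lemma Phi_nz: "Phi \<noteq> 0" using Phi_deg by auto

lemma faith:
  assumes "inI p (of_int c)"
  shows "int p dvd c"
proof -
  obtain Q R where e: "of_int c = smult (int p) Q + Phi * R" using assms unfolding inI_def by blast
  obtain q r where qr: "pseudo_divmod Q Phi = (q, r)" by (cases "pseudo_divmod Q Phi") auto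
  have Q: "Q = Phi * q + r" using pseudo_divmod(1)[OF Phi_nz qr] Phi_deg Phi_lc by simp
  have r: "r = 0 \<or> degree r < 16" using pseudo_divmod(2)[OF Phi_nz qr] Phi_deg by simp
  define X where "X = R + smult (int p) q"
  have eX: "[:c:] - smult (int p) r = Phi * X"
    using e Q unfolding X_def by (simp add: algebra_simps smult_add_right of_int_poly)
  have dl: "degree ([:c:] - smult (int p) r) < 16"
  proof -
    have "degree ([:c:] - smult (int p) r) \<le> max (degree [:c:]) (degree (smult (int p) r))"
      by (rule degree_diff_le_max)
    moreover have "degree (smult (int p) r) < 16" using r degree_smult_le[of "int p" r] by auto
    ultimately show ?thesis by simp
  qed
  have "X = 0"
  proof (rule ccontr)
    assume "X \<noteq> 0"
    then have "degree (Phi * X) = 16 + degree X" using Phi_nz Phi_deg by (simp add: degree_mult_eq)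
    then show False using dl eX by simp
  qed
  then have "[:c:] = smult (int p) r" using eX by simp
  then have "coeff [:c:] 0 = coeff (smult (int p) r) 0" by simp
  then have "c = int p * coeff r 0" by simp
  then show ?thesis by simp
qed



definition ss :: "int poly" where "ss = [:0, 1, 1, -1, 1, -1, -1, -1, 1, 1, -1, -1, -1, 1, -1, 1, 1:]"
definition d0 :: "int poly" where "d0 = [:0, 0, 0, -1, 0, -1, 1, 1, 0, 0, 1, 1, -1, 0, -1, 0, 0:]"
definition d1 :: "int poly" where "d1 = [:0, 1, -1, 0, 1, 0, 0, 0, -1, -1, 0, 0, 0, 1, 0, -1, 1:]"

lemma inI_pm:
  assumes a: "coeffs (pseudo_mod D Phi) = []"
  shows "inI p D"
proof -
  obtain q r where qr: "pseudo_divmod D Phi = (q, r)" by (cases "pseudo_divmod D Phi") auto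
  have "r = pseudo_mod D Phi" using qr unfolding pseudo_mod_def by simp
  then have r0: "r = 0" using a by simp
  have "D = Phi * q + r" using pseudo_divmod(1)[OF Phi_nz qr] Phi_deg Phi_lc by simp
  then have "D = smult (int p) 0 + Phi * q" using r0 by simp
  then show ?thesis unfolding inI_def by blast
qed

lemma cg_pm: "coeffs (pseudo_mod (A - B) Phi) = [] \<Longrightarrow> cg p A B"
  unfolding cg_def by (rule inI_pm)

lemma F1: "cg p (ss * ss) 17"
  by (rule cg_pm) (unfold ss_def Phi_def, code_simp)
lemma F2: "cg p (2 * d0 * d0) (ss * (ss + 1))"
  by (rule cg_pm) (unfold ss_def d0_def Phi_def, code_simp)
lemma F3: "cg p (2 * d1 * d1) (ss * (ss - 1))"
  by (rule cg_pm) (unfold ss_def d1_def Phi_def, code_simp)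
lemma F4: "cg p (d0 * d1) (- 2 * ss)"
  by (rule cg_pm) (unfold ss_def d0_def d1_def Phi_def, code_simp)
lemma E0: "cg p (2 * (d0 * d1 + d1 * d0)) (of_int (-8) * ss)"
  by (rule cg_pm) (unfold ss_def d0_def d1_def Phi_def, code_simp)
lemma E1: "cg p (2 * (d1 * d1 + (- d0) * d0)) (of_int (-2) * ss)"
  by (rule cg_pm) (unfold ss_def d0_def d1_def Phi_def, code_simp)
lemma E2: "cg p (2 * ((- d0) * d1 + (- d1) * d0)) (of_int 8 * ss)"
  by (rule cg_pm) (unfold ss_def d0_def d1_def Phi_def, code_simp)
lemma E3: "cg p (2 * ((- d1) * d1 + d0 * d0)) (of_int 2 * ss)"
  by (rule cg_pm) (unfold ss_def d0_def d1_def Phi_def, code_simp)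

lemma ss_cf: "set (coeffs ss) \<subseteq> {-1, 0, 1}" unfolding ss_def by code_simp
lemma d0_cf: "set (coeffs d0) \<subseteq> {-1, 0, 1}" unfolding d0_def by code_simp
lemma d1_cf: "set (coeffs d1) \<subseteq> {-1, 0, 1}" unfolding d1_def by code_simp
lemma ss_dg: "degree ss < 17" unfolding ss_def by code_simp
lemma d0_dg: "degree d0 < 17" unfolding d0_def by code_simp
lemma d1_dg: "degree d1 < 17" unfolding d1_def by code_simp

lemma test3: "coeffs (\<Sum>j<17. monom (coeff d0 j) ((j * 3) mod 17)) = coeffs d1"
  unfolding d0_def d1_def by code_simp

lemma frob_conc:
  assumes p: "prime p" "odd p" and r: "p mod 17 = r"
    and cf: "set (coeffs X) \<subseteq> {-1,0,1}" and dg: "degree X < 17"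
    and c: "coeffs (\<Sum>j<17. monom (coeff X j) ((j * r) mod 17)) = coeffs Y"
  shows "cg p (X ^ p) Y"
proof -
  have "(\<Sum>j<17. monom (coeff X j) ((j * r) mod 17)) = Y" using c by (simp add: coeffs_eq_iff)
  then show ?thesis using frob[OF p cf dg] r by simp
qed

lemma even_part:
  fixes g :: "nat \<Rightarrow> 'a::comm_ring_1"
  shows "(\<Sum>m\<le>N. (1 + (-1)^m) * g m) = 2 * (\<Sum>k\<le>N div 2. g (2*k))"
proof (induction N)
  case 0 then show ?case by simp
next
  case (Suc N)
  show ?case
  proof (cases "even (Suc N)")
    case True
    then have d: "Suc N div 2 = Suc (N div 2)" and e: "2 * Suc (N div 2) = Suc N" by presburger+
    have "(\<Sum>m\<le>Suc N. (1 + (-1)^m) * g m) = (\<Sum>m\<le>N. (1 + (-1)^m) * g m) + 2 * g (Suc N)"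
      using True by (simp add: neg_one_even_power)
    then show ?thesis using Suc.IH d e by (simp add: algebra_simps)
  next
    case False
    then have d: "Suc N div 2 = N div 2" by presburger
    have "(\<Sum>m\<le>Suc N. (1 + (-1)^m) * g m) = (\<Sum>m\<le>N. (1 + (-1)^m) * g m)"
      using False by (simp add: neg_one_odd_power)
    then show ?thesis using Suc.IH d by simp
  qed
qed

lemma binom_even:
  fixes s :: "'a::comm_ring_1"
  shows "(s + 1)^h + (s - 1)^h = 2 * (\<Sum>k\<le>h div 2. of_nat (h choose (2*k)) * s^(h - 2*k))"
proof -
  have a0: "(1 + s)^h = (\<Sum>m\<le>h. of_nat (h choose m) * 1 ^ m * s^(h-m))"
    by (rule binomial_ring)
  have a: "(s + 1)^h = (\<Sum>m\<le>h. of_nat (h choose m) * s^(h-m))"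
    using a0 by (simp add: add.commute)
  have b0: "(-1 + s)^h = (\<Sum>m\<le>h. of_nat (h choose m) * (-1) ^ m * s^(h-m))"
    by (rule binomial_ring)
  have b: "(s - 1)^h = (\<Sum>m\<le>h. (-1)^m * (of_nat (h choose m) * s^(h-m)))"
    using b0 by (simp add: mult_ac)
  have "(s+1)^h + (s-1)^h = (\<Sum>m\<le>h. (1 + (-1)^m) * (of_nat (h choose m) * s^(h-m)))"
    unfolding a b by (simp add: sum.distrib[symmetric] algebra_simps)
  also have "\<dots> = 2 * (\<Sum>k\<le>h div 2. of_nat (h choose (2*k)) * s^(h-2*k))"
    by (rule even_part)
  finally show ?thesis .
qed

lemma ss_pow_even: "cg p (ss ^ (2*m)) (17 ^ m)"
proof -
  have "ss ^ (2*m) = (ss*ss)^m" by (simp add: power_mult power2_eq_square)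
  then show ?thesis using cg_power[OF F1, of p m] by simp
qed



lemma core:
  assumes p: "prime p" "odd p"
    and fs: "cg p (ss ^ p) (of_int e * ss)" and fa: "cg p (d0 ^ p) a" and fb: "cg p (d1 ^ p) b"
    and fc: "cg p (2 * (a * d1 + b * d0)) (of_int ck * ss)"
  defines "h \<equiv> (p - 1) div 2"
  shows "int p dvd (2 ^ h * ck * 17 + 136 * (\<Sum>k\<le>h div 2. int (h choose (2*k)) * 17 ^ (h - k)))"
    and "int p dvd (17 ^ (h + 1) - 17 * e)"
proof -
  have hp: "p = 2 * h + 1" using p(2) unfolding h_def by presburger
  have hp': "p = Suc (2 * h)" using hp by simp
  define V where "V = (\<Sum>k\<le>h div 2. int (h choose (2*k)) * 17 ^ (h - k))"
  have s1: "ss ^ p = ss ^ (2*h) * ss" unfolding hp' by (rule power_Suc2)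
  have c1: "cg p (ss ^ (2*h) * ss) (17 ^ h * ss)" by (intro cg_mult ss_pow_even cg_refl)
  have "cg p (ss ^ (2*h) * ss) (of_int e * ss)" using fs s1 by simp
  then have c2: "cg p (17 ^ h * ss) (of_int e * ss)" by (rule cg_trans[OF cg_sym[OF c1]])
  then have c3: "cg p (17 ^ h * ss * ss) (of_int e * ss * ss)" by (rule cg_mult[OF _ cg_refl])
  have c4: "cg p (17 ^ h * ss * ss) (17 ^ h * 17)"
    unfolding mult.assoc by (intro cg_mult cg_refl F1)
  have c5: "cg p (of_int e * ss * ss) (of_int e * 17)"
    unfolding mult.assoc by (intro cg_mult cg_refl F1)
  have "cg p (17 ^ h * 17) (of_int e * 17)"
    by (rule cg_trans[OF cg_sym[OF c4] cg_trans[OF c3 c5]])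
  then have "inI p (17 ^ h * 17 - of_int e * 17)" unfolding cg_def .
  moreover have "(17 ^ h * 17 - of_int e * 17 :: int poly) = of_int (17 ^ (h + 1) - 17 * e)"
    by simp
  ultimately show "int p dvd (17 ^ (h + 1) - 17 * e)" using faith by metis
  have pw0: "d0 ^ p = d0 ^ (2*h) * d0" unfolding hp' by (rule power_Suc2)
  have pw1: "d1 ^ p = d1 ^ (2*h) * d1" unfolding hp' by (rule power_Suc2)
  have q0: "(2 * d0 * d0) ^ h = 2 ^ h * d0 ^ (2*h)" by (simp only: mult.assoc power_mult_distrib power_mult power2_eq_square)
  have q1: "(2 * d1 * d1) ^ h = 2 ^ h * d1 ^ (2*h)" by (simp only: mult.assoc power_mult_distrib power_mult power2_eq_square)
  have T1: "cg p (2 ^ h * a * d1) (- 2 * ss * (ss * (ss + 1)) ^ h)"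
  proof -
    have "cg p (2 ^ h * a * d1) (2 ^ h * d0 ^ p * d1)"
      by (intro cg_mult cg_refl cg_sym[OF fa])
    also have "2 ^ h * d0 ^ p * d1 = d0 * d1 * (2 * d0 * d0) ^ h"
      unfolding pw0 q0 by (simp add: mult_ac)
    also have "cg p \<dots> (- 2 * ss * (ss * (ss + 1)) ^ h)"
      by (intro cg_mult cg_power F2 F4)
    finally show ?thesis .
  qed
  have T2: "cg p (2 ^ h * b * d0) (- 2 * ss * (ss * (ss - 1)) ^ h)"
  proof -
    have "cg p (2 ^ h * b * d0) (2 ^ h * d1 ^ p * d0)"
      by (intro cg_mult cg_refl cg_sym[OF fb])
    also have "2 ^ h * d1 ^ p * d0 = d0 * d1 * (2 * d1 * d1) ^ h"
      unfolding pw1 q1 by (simp add: mult_ac)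
    also have "cg p \<dots> (- 2 * ss * (ss * (ss - 1)) ^ h)"
      by (intro cg_mult cg_power F3 F4)
    finally show ?thesis .
  qed
  have T3: "cg p (2 ^ h * (a * d1 + b * d0))
      (- 2 * ss * (ss * (ss + 1)) ^ h + - 2 * ss * (ss * (ss - 1)) ^ h)"
    using cg_add[OF T1 T2] by (simp add: algebra_simps)
  have e1: "- 2 * ss * (ss * (ss + 1)) ^ h + - 2 * ss * (ss * (ss - 1)) ^ h
      = - 2 * ss * ss ^ h * ((ss + 1) ^ h + (ss - 1) ^ h)"
    by (simp only: power_mult_distrib) (simp add: algebra_simps)
  also have "\<dots> = - 4 * (\<Sum>k\<le>h div 2. of_nat (h choose (2*k)) * (ss ^ (h + 1) * ss ^ (h - 2*k)))"
    unfolding binom_even by (simp add: sum_distrib_left mult_ac)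
  finally have e2: "- 2 * ss * (ss * (ss + 1)) ^ h + - 2 * ss * (ss * (ss - 1)) ^ h
      = - 4 * (\<Sum>k\<le>h div 2. of_nat (h choose (2*k)) * (ss ^ (h + 1) * ss ^ (h - 2*k)))" .
  have T4: "cg p (\<Sum>k\<le>h div 2. of_nat (h choose (2*k)) * (ss ^ (h + 1) * ss ^ (h - 2*k)))
      (\<Sum>k\<le>h div 2. of_nat (h choose (2*k)) * (17 ^ (h - k) * ss))"
  proof (rule cg_sum)
    fix k assume "k \<in> {..h div 2}"
    then have "h + 1 + (h - 2*k) = 2 * (h - k) + 1" by auto
    then have "ss ^ (h + 1) * ss ^ (h - 2*k) = ss ^ (2 * (h - k)) * ss"
      by (metis power_add power_one_right)
    moreover have "cg p (ss ^ (2 * (h - k)) * ss) (17 ^ (h - k) * ss)"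
      by (intro cg_mult ss_pow_even cg_refl)
    ultimately show "cg p (of_nat (h choose (2*k)) * (ss ^ (h + 1) * ss ^ (h - 2*k)))
        (of_nat (h choose (2*k)) * (17 ^ (h - k) * ss))"
      by (metis cg_mult cg_refl)
  qed simp
  have e3: "(\<Sum>k\<le>h div 2. of_nat (h choose (2*k)) * (17 ^ (h - k) * ss)) = of_int V * ss"
    unfolding V_def by (simp add: sum_distrib_left sum_distrib_right mult_ac)
  have T5: "cg p (2 ^ h * (a * d1 + b * d0)) (- 4 * (of_int V * ss))"
  proof -
    have "cg p (- 4 * (\<Sum>k\<le>h div 2. of_nat (h choose (2*k)) * (ss ^ (h + 1) * ss ^ (h - 2*k))))
      (- 4 * (\<Sum>k\<le>h div 2. of_nat (h choose (2*k)) * (17 ^ (h - k) * ss)))"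
      by (intro cg_mult cg_refl T4)
    then show ?thesis using cg_trans[OF T3[unfolded e2]] unfolding e3 by blast
  qed
  have T6: "cg p (2 * ss * (2 ^ h * (a * d1 + b * d0))) (2 * ss * (- 4 * (of_int V * ss)))"
    by (intro cg_mult cg_refl T5)
  have "2 * ss * (2 ^ h * (a * d1 + b * d0)) = 2 ^ h * ss * (2 * (a * d1 + b * d0))"
    by (simp add: mult_ac)
  also have "cg p \<dots> (2 ^ h * ss * (of_int ck * ss))" by (intro cg_mult cg_refl fc)
  also have "2 ^ h * ss * (of_int ck * ss) = 2 ^ h * of_int ck * (ss * ss)" by (simp add: mult_ac)
  also have "cg p \<dots> (2 ^ h * of_int ck * 17)" by (intro cg_mult cg_refl F1)
  finally have T7: "cg p (2 * ss * (2 ^ h * (a * d1 + b * d0))) (2 ^ h * of_int ck * 17)" .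
  have "2 * ss * (- 4 * (of_int V * ss)) = - 8 * of_int V * (ss * ss)" by (simp add: mult_ac)
  also have "cg p \<dots> (- 8 * of_int V * 17)" by (intro cg_mult cg_refl F1)
  finally have T8: "cg p (2 * ss * (- 4 * (of_int V * ss))) (- 8 * of_int V * 17)" .
  have "cg p (2 ^ h * of_int ck * 17) (- 8 * of_int V * 17)"
    by (rule cg_trans[OF cg_sym[OF T7] cg_trans[OF T6 T8]])
  then have "inI p (2 ^ h * of_int ck * 17 - (- 8 * of_int V * 17))" unfolding cg_def .
  moreover have "(2 ^ h * of_int ck * 17 - (- 8 * of_int V * 17) :: int poly)
      = of_int (2 ^ h * ck * 17 + 136 * V)" by simp
  ultimately have "int p dvd (2 ^ h * ck * 17 + 136 * V)" using faith by metis
  then show "int p dvd (2 ^ h * ck * 17 + 136 * (\<Sum>k\<le>h div 2. int (h choose (2*k)) * 17 ^ (h - k)))"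
    unfolding V_def .
qed



lemma cb_cong:
  assumes p: "prime p" "odd p" and m: "m \<le> (p - 1) div 2"
  shows "int p dvd (int ((2*m) choose m) - (-4)^m * int (((p - 1) div 2) choose m))"
  using m
proof (induction m)
  case 0 then show ?case by simp
next
  case (Suc m)
  define h where "h = (p - 1) div 2"
  have hp: "p = 2 * h + 1" using p(2) unfolding h_def by presburger
  have mh: "Suc m \<le> h" using Suc.prems h_def by simp
  have IH: "int p dvd (int ((2*m) choose m) - (-4)^m * int (h choose m))"
    using Suc.IH mh h_def by simp
  define B where "B = int ((2*m) choose m)"
  define A where "A = (-4)^m * int (h choose m)"
  define B' where "B' = int ((2 * Suc m) choose Suc m)"
  define A' where "A' = (-4)^(Suc m) * int (h choose Suc m)"
  have r1n: "Suc m * ((2 * Suc m) choose Suc m) = 2 * (2*m+1) * ((2*m) choose m)"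
  proof -
    have a: "Suc m * ((2*m+2) choose Suc m) = (2*m+2) * ((2*m+1) choose m)"
      using binomial_absorption[of m "2*m+2"] by simp
    have b: "(2*m+1) * ((2*m) choose m) = ((2*m+1) choose Suc m) * Suc m"
      using Suc_times_binomial_eq[of "2*m" m] by simp
    have c: "((2*m+1) choose Suc m) = ((2*m+1) choose m)"
      using binomial_symmetric[of "Suc m" "2*m+1"] by simp
    have d: "2 * Suc m = 2*m+2" by simp
    have "Suc m * ((2 * Suc m) choose Suc m) = 2 * (Suc m * ((2*m+1) choose m))"
      unfolding d a by simp
    also have "\<dots> = 2 * ((2*m+1) * ((2*m) choose m))" using b c by (simp add: mult.commute)
    finally show ?thesis by simp
  qed
  have r2n: "Suc m * (h choose Suc m) = (h - m) * (h choose m)"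
    using binomial_absorption[of m h] binomial_absorb_comp[of h m] by simp
  have r1: "int (Suc m) * B' = 2 * (2 * int m + 1) * B"
  proof -
    have "int (Suc m) * B' = int (Suc m * ((2 * Suc m) choose Suc m))"
      unfolding B'_def by (simp only: of_nat_mult)
    also have "\<dots> = int (2 * (2*m+1) * ((2*m) choose m))"
      by (simp only: r1n)
    also have "\<dots> = 2 * (2 * int m + 1) * B"
      unfolding B_def by (simp only: of_nat_mult of_nat_add of_nat_1 of_nat_numeral)
    finally show ?thesis .
  qed
  have r2: "int (Suc m) * A' = - 4 * (int h - int m) * A"
  proof -
    have "int (Suc m * (h choose Suc m)) = int ((h - m) * (h choose m))" using r2n by simp
    then have pr: "int (Suc m) * int (h choose Suc m) = (int h - int m) * int (h choose m)"
      using mh by (simp add: of_nat_diff algebra_simps)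
    have "int (Suc m) * A' = (- 4) * (- 4) ^ m * (int (Suc m) * int (h choose Suc m))"
      unfolding A'_def by (simp only: power_Suc mult_ac)
    also have "\<dots> = (- 4) * (- 4) ^ m * ((int h - int m) * int (h choose m))"
      by (simp only: pr)
    also have "\<dots> = - 4 * (int h - int m) * A"
      unfolding A_def by (simp only: mult_ac)
    finally show ?thesis .
  qed
  have key: "int (Suc m) * (B' - A') = 2 * (2 * int m + 1) * (B - A) + int p * (2 * A)"
    using r1 r2 hp by (simp add: algebra_simps)
  have "int p dvd int (Suc m) * (B' - A')"
    unfolding key using IH unfolding B_def A_def by simp
  moreover have "\<not> int p dvd int (Suc m)"
  proof
    assume "int p dvd int (Suc m)"
    then have "p dvd Suc m" by (simp only: of_nat_dvd_iff)
    then have "p \<le> Suc m" by (rule dvd_imp_le) simp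
    then show False using mh hp by simp
  qed
  moreover have "prime (int p)" using p(1) by simp
  ultimately have "int p dvd (B' - A')" using prime_dvd_mult_iff by blast
  then show ?case unfolding B'_def A'_def h_def by simp
qed

lemma FR_1:
  assumes "prime p" "odd p" "p mod 17 = 1"
  shows "cg p (ss ^ p) (of_int (1) * ss) \<and> cg p (d0 ^ p) (d0) \<and> cg p (d1 ^ p) (d1)"
proof -
  have 1: "coeffs (\<Sum>j<17. monom (coeff ss j) ((j * 1) mod 17)) = coeffs (of_int (1) * ss)"
    unfolding ss_def by code_simp
  have 2: "coeffs (\<Sum>j<17. monom (coeff d0 j) ((j * 1) mod 17)) = coeffs (d0)"
    unfolding d0_def d1_def by code_simp
  have 3: "coeffs (\<Sum>j<17. monom (coeff d1 j) ((j * 1) mod 17)) = coeffs (d1)"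
    unfolding d0_def d1_def by code_simp
  show ?thesis using frob_conc[OF assms ss_cf ss_dg 1] frob_conc[OF assms d0_cf d0_dg 2]
    frob_conc[OF assms d1_cf d1_dg 3] by blast
qed

lemma FR_4:
  assumes "prime p" "odd p" "p mod 17 = 4"
  shows "cg p (ss ^ p) (of_int (1) * ss) \<and> cg p (d0 ^ p) (d0) \<and> cg p (d1 ^ p) (d1)"
proof -
  have 1: "coeffs (\<Sum>j<17. monom (coeff ss j) ((j * 4) mod 17)) = coeffs (of_int (1) * ss)"
    unfolding ss_def by code_simp
  have 2: "coeffs (\<Sum>j<17. monom (coeff d0 j) ((j * 4) mod 17)) = coeffs (d0)"
    unfolding d0_def d1_def by code_simp
  have 3: "coeffs (\<Sum>j<17. monom (coeff d1 j) ((j * 4) mod 17)) = coeffs (d1)"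
    unfolding d0_def d1_def by code_simp
  show ?thesis using frob_conc[OF assms ss_cf ss_dg 1] frob_conc[OF assms d0_cf d0_dg 2]
    frob_conc[OF assms d1_cf d1_dg 3] by blast
qed

lemma FR_13:
  assumes "prime p" "odd p" "p mod 17 = 13"
  shows "cg p (ss ^ p) (of_int (1) * ss) \<and> cg p (d0 ^ p) (d0) \<and> cg p (d1 ^ p) (d1)"
proof -
  have 1: "coeffs (\<Sum>j<17. monom (coeff ss j) ((j * 13) mod 17)) = coeffs (of_int (1) * ss)"
    unfolding ss_def by code_simp
  have 2: "coeffs (\<Sum>j<17. monom (coeff d0 j) ((j * 13) mod 17)) = coeffs (d0)"
    unfolding d0_def d1_def by code_simp
  have 3: "coeffs (\<Sum>j<17. monom (coeff d1 j) ((j * 13) mod 17)) = coeffs (d1)"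
    unfolding d0_def d1_def by code_simp
  show ?thesis using frob_conc[OF assms ss_cf ss_dg 1] frob_conc[OF assms d0_cf d0_dg 2]
    frob_conc[OF assms d1_cf d1_dg 3] by blast
qed

lemma FR_16:
  assumes "prime p" "odd p" "p mod 17 = 16"
  shows "cg p (ss ^ p) (of_int (1) * ss) \<and> cg p (d0 ^ p) (d0) \<and> cg p (d1 ^ p) (d1)"
proof -
  have 1: "coeffs (\<Sum>j<17. monom (coeff ss j) ((j * 16) mod 17)) = coeffs (of_int (1) * ss)"
    unfolding ss_def by code_simp
  have 2: "coeffs (\<Sum>j<17. monom (coeff d0 j) ((j * 16) mod 17)) = coeffs (d0)"
    unfolding d0_def d1_def by code_simp
  have 3: "coeffs (\<Sum>j<17. monom (coeff d1 j) ((j * 16) mod 17)) = coeffs (d1)"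
    unfolding d0_def d1_def by code_simp
  show ?thesis using frob_conc[OF assms ss_cf ss_dg 1] frob_conc[OF assms d0_cf d0_dg 2]
    frob_conc[OF assms d1_cf d1_dg 3] by blast
qed

lemma FR_3:
  assumes "prime p" "odd p" "p mod 17 = 3"
  shows "cg p (ss ^ p) (of_int (-1) * ss) \<and> cg p (d0 ^ p) (d1) \<and> cg p (d1 ^ p) (- d0)"
proof -
  have 1: "coeffs (\<Sum>j<17. monom (coeff ss j) ((j * 3) mod 17)) = coeffs (of_int (-1) * ss)"
    unfolding ss_def by code_simp
  have 2: "coeffs (\<Sum>j<17. monom (coeff d0 j) ((j * 3) mod 17)) = coeffs (d1)"
    unfolding d0_def d1_def by code_simp
  have 3: "coeffs (\<Sum>j<17. monom (coeff d1 j) ((j * 3) mod 17)) = coeffs (- d0)"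
    unfolding d0_def d1_def by code_simp
  show ?thesis using frob_conc[OF assms ss_cf ss_dg 1] frob_conc[OF assms d0_cf d0_dg 2]
    frob_conc[OF assms d1_cf d1_dg 3] by blast
qed

lemma FR_5:
  assumes "prime p" "odd p" "p mod 17 = 5"
  shows "cg p (ss ^ p) (of_int (-1) * ss) \<and> cg p (d0 ^ p) (d1) \<and> cg p (d1 ^ p) (- d0)"
proof -
  have 1: "coeffs (\<Sum>j<17. monom (coeff ss j) ((j * 5) mod 17)) = coeffs (of_int (-1) * ss)"
    unfolding ss_def by code_simp
  have 2: "coeffs (\<Sum>j<17. monom (coeff d0 j) ((j * 5) mod 17)) = coeffs (d1)"
    unfolding d0_def d1_def by code_simp
  have 3: "coeffs (\<Sum>j<17. monom (coeff d1 j) ((j * 5) mod 17)) = coeffs (- d0)"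
    unfolding d0_def d1_def by code_simp
  show ?thesis using frob_conc[OF assms ss_cf ss_dg 1] frob_conc[OF assms d0_cf d0_dg 2]
    frob_conc[OF assms d1_cf d1_dg 3] by blast
qed

lemma FR_12:
  assumes "prime p" "odd p" "p mod 17 = 12"
  shows "cg p (ss ^ p) (of_int (-1) * ss) \<and> cg p (d0 ^ p) (d1) \<and> cg p (d1 ^ p) (- d0)"
proof -
  have 1: "coeffs (\<Sum>j<17. monom (coeff ss j) ((j * 12) mod 17)) = coeffs (of_int (-1) * ss)"
    unfolding ss_def by code_simp
  have 2: "coeffs (\<Sum>j<17. monom (coeff d0 j) ((j * 12) mod 17)) = coeffs (d1)"
    unfolding d0_def d1_def by code_simp
  have 3: "coeffs (\<Sum>j<17. monom (coeff d1 j) ((j * 12) mod 17)) = coeffs (- d0)"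
    unfolding d0_def d1_def by code_simp
  show ?thesis using frob_conc[OF assms ss_cf ss_dg 1] frob_conc[OF assms d0_cf d0_dg 2]
    frob_conc[OF assms d1_cf d1_dg 3] by blast
qed

lemma FR_14:
  assumes "prime p" "odd p" "p mod 17 = 14"
  shows "cg p (ss ^ p) (of_int (-1) * ss) \<and> cg p (d0 ^ p) (d1) \<and> cg p (d1 ^ p) (- d0)"
proof -
  have 1: "coeffs (\<Sum>j<17. monom (coeff ss j) ((j * 14) mod 17)) = coeffs (of_int (-1) * ss)"
    unfolding ss_def by code_simp
  have 2: "coeffs (\<Sum>j<17. monom (coeff d0 j) ((j * 14) mod 17)) = coeffs (d1)"
    unfolding d0_def d1_def by code_simp
  have 3: "coeffs (\<Sum>j<17. monom (coeff d1 j) ((j * 14) mod 17)) = coeffs (- d0)"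
    unfolding d0_def d1_def by code_simp
  show ?thesis using frob_conc[OF assms ss_cf ss_dg 1] frob_conc[OF assms d0_cf d0_dg 2]
    frob_conc[OF assms d1_cf d1_dg 3] by blast
qed

lemma FR_2:
  assumes "prime p" "odd p" "p mod 17 = 2"
  shows "cg p (ss ^ p) (of_int (1) * ss) \<and> cg p (d0 ^ p) (- d0) \<and> cg p (d1 ^ p) (- d1)"
proof -
  have 1: "coeffs (\<Sum>j<17. monom (coeff ss j) ((j * 2) mod 17)) = coeffs (of_int (1) * ss)"
    unfolding ss_def by code_simp
  have 2: "coeffs (\<Sum>j<17. monom (coeff d0 j) ((j * 2) mod 17)) = coeffs (- d0)"
    unfolding d0_def d1_def by code_simp
  have 3: "coeffs (\<Sum>j<17. monom (coeff d1 j) ((j * 2) mod 17)) = coeffs (- d1)"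
    unfolding d0_def d1_def by code_simp
  show ?thesis using frob_conc[OF assms ss_cf ss_dg 1] frob_conc[OF assms d0_cf d0_dg 2]
    frob_conc[OF assms d1_cf d1_dg 3] by blast
qed

lemma FR_8:
  assumes "prime p" "odd p" "p mod 17 = 8"
  shows "cg p (ss ^ p) (of_int (1) * ss) \<and> cg p (d0 ^ p) (- d0) \<and> cg p (d1 ^ p) (- d1)"
proof -
  have 1: "coeffs (\<Sum>j<17. monom (coeff ss j) ((j * 8) mod 17)) = coeffs (of_int (1) * ss)"
    unfolding ss_def by code_simp
  have 2: "coeffs (\<Sum>j<17. monom (coeff d0 j) ((j * 8) mod 17)) = coeffs (- d0)"
    unfolding d0_def d1_def by code_simp
  have 3: "coeffs (\<Sum>j<17. monom (coeff d1 j) ((j * 8) mod 17)) = coeffs (- d1)"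
    unfolding d0_def d1_def by code_simp
  show ?thesis using frob_conc[OF assms ss_cf ss_dg 1] frob_conc[OF assms d0_cf d0_dg 2]
    frob_conc[OF assms d1_cf d1_dg 3] by blast
qed

lemma FR_9:
  assumes "prime p" "odd p" "p mod 17 = 9"
  shows "cg p (ss ^ p) (of_int (1) * ss) \<and> cg p (d0 ^ p) (- d0) \<and> cg p (d1 ^ p) (- d1)"
proof -
  have 1: "coeffs (\<Sum>j<17. monom (coeff ss j) ((j * 9) mod 17)) = coeffs (of_int (1) * ss)"
    unfolding ss_def by code_simp
  have 2: "coeffs (\<Sum>j<17. monom (coeff d0 j) ((j * 9) mod 17)) = coeffs (- d0)"
    unfolding d0_def d1_def by code_simp
  have 3: "coeffs (\<Sum>j<17. monom (coeff d1 j) ((j * 9) mod 17)) = coeffs (- d1)"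
    unfolding d0_def d1_def by code_simp
  show ?thesis using frob_conc[OF assms ss_cf ss_dg 1] frob_conc[OF assms d0_cf d0_dg 2]
    frob_conc[OF assms d1_cf d1_dg 3] by blast
qed

lemma FR_15:
  assumes "prime p" "odd p" "p mod 17 = 15"
  shows "cg p (ss ^ p) (of_int (1) * ss) \<and> cg p (d0 ^ p) (- d0) \<and> cg p (d1 ^ p) (- d1)"
proof -
  have 1: "coeffs (\<Sum>j<17. monom (coeff ss j) ((j * 15) mod 17)) = coeffs (of_int (1) * ss)"
    unfolding ss_def by code_simp
  have 2: "coeffs (\<Sum>j<17. monom (coeff d0 j) ((j * 15) mod 17)) = coeffs (- d0)"
    unfolding d0_def d1_def by code_simp
  have 3: "coeffs (\<Sum>j<17. monom (coeff d1 j) ((j * 15) mod 17)) = coeffs (- d1)"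
    unfolding d0_def d1_def by code_simp
  show ?thesis using frob_conc[OF assms ss_cf ss_dg 1] frob_conc[OF assms d0_cf d0_dg 2]
    frob_conc[OF assms d1_cf d1_dg 3] by blast
qed

lemma FR_6:
  assumes "prime p" "odd p" "p mod 17 = 6"
  shows "cg p (ss ^ p) (of_int (-1) * ss) \<and> cg p (d0 ^ p) (- d1) \<and> cg p (d1 ^ p) (d0)"
proof -
  have 1: "coeffs (\<Sum>j<17. monom (coeff ss j) ((j * 6) mod 17)) = coeffs (of_int (-1) * ss)"
    unfolding ss_def by code_simp
  have 2: "coeffs (\<Sum>j<17. monom (coeff d0 j) ((j * 6) mod 17)) = coeffs (- d1)"
    unfolding d0_def d1_def by code_simp
  have 3: "coeffs (\<Sum>j<17. monom (coeff d1 j) ((j * 6) mod 17)) = coeffs (d0)"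
    unfolding d0_def d1_def by code_simp
  show ?thesis using frob_conc[OF assms ss_cf ss_dg 1] frob_conc[OF assms d0_cf d0_dg 2]
    frob_conc[OF assms d1_cf d1_dg 3] by blast
qed

lemma FR_7:
  assumes "prime p" "odd p" "p mod 17 = 7"
  shows "cg p (ss ^ p) (of_int (-1) * ss) \<and> cg p (d0 ^ p) (- d1) \<and> cg p (d1 ^ p) (d0)"
proof -
  have 1: "coeffs (\<Sum>j<17. monom (coeff ss j) ((j * 7) mod 17)) = coeffs (of_int (-1) * ss)"
    unfolding ss_def by code_simp
  have 2: "coeffs (\<Sum>j<17. monom (coeff d0 j) ((j * 7) mod 17)) = coeffs (- d1)"
    unfolding d0_def d1_def by code_simp
  have 3: "coeffs (\<Sum>j<17. monom (coeff d1 j) ((j * 7) mod 17)) = coeffs (d0)"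
    unfolding d0_def d1_def by code_simp
  show ?thesis using frob_conc[OF assms ss_cf ss_dg 1] frob_conc[OF assms d0_cf d0_dg 2]
    frob_conc[OF assms d1_cf d1_dg 3] by blast
qed

lemma FR_10:
  assumes "prime p" "odd p" "p mod 17 = 10"
  shows "cg p (ss ^ p) (of_int (-1) * ss) \<and> cg p (d0 ^ p) (- d1) \<and> cg p (d1 ^ p) (d0)"
proof -
  have 1: "coeffs (\<Sum>j<17. monom (coeff ss j) ((j * 10) mod 17)) = coeffs (of_int (-1) * ss)"
    unfolding ss_def by code_simp
  have 2: "coeffs (\<Sum>j<17. monom (coeff d0 j) ((j * 10) mod 17)) = coeffs (- d1)"
    unfolding d0_def d1_def by code_simp
  have 3: "coeffs (\<Sum>j<17. monom (coeff d1 j) ((j * 10) mod 17)) = coeffs (d0)"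
    unfolding d0_def d1_def by code_simp
  show ?thesis using frob_conc[OF assms ss_cf ss_dg 1] frob_conc[OF assms d0_cf d0_dg 2]
    frob_conc[OF assms d1_cf d1_dg 3] by blast
qed

lemma FR_11:
  assumes "prime p" "odd p" "p mod 17 = 11"
  shows "cg p (ss ^ p) (of_int (-1) * ss) \<and> cg p (d0 ^ p) (- d1) \<and> cg p (d1 ^ p) (d0)"
proof -
  have 1: "coeffs (\<Sum>j<17. monom (coeff ss j) ((j * 11) mod 17)) = coeffs (of_int (-1) * ss)"
    unfolding ss_def by code_simp
  have 2: "coeffs (\<Sum>j<17. monom (coeff d0 j) ((j * 11) mod 17)) = coeffs (- d1)"
    unfolding d0_def d1_def by code_simp
  have 3: "coeffs (\<Sum>j<17. monom (coeff d1 j) ((j * 11) mod 17)) = coeffs (d0)"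
    unfolding d0_def d1_def by code_simp
  show ?thesis using frob_conc[OF assms ss_cf ss_dg 1] frob_conc[OF assms d0_cf d0_dg 2]
    frob_conc[OF assms d1_cf d1_dg 3] by blast
qed

lemma main_case:
  assumes p: "prime p" "odd p" "p \<noteq> 17"
    and fs: "cg p (ss ^ p) (of_int e * ss)" and fa: "cg p (d0 ^ p) a" and fb: "cg p (d1 ^ p) b"
    and fc: "cg p (2 * (a * d1 + b * d0)) (of_int ck * ss)"
    and rel: "- ck = 2 * c * e"
  shows "[4 * Legendre 2 (int p) * (\<Sum>k=0..p div 4. int ((4*k) choose (2*k)) * 272 ^ (p div 4 - k))
          = c * 272 ^ (p div 4)] (mod int p)"
proof -
  define h where "h = (p - 1) div 2"
  define n where "n = p div 4"
  have hp: "p = 2 * h + 1" using p(2) unfolding h_def by presburger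
  have nh: "n = h div 2" unfolding n_def h_def using p(2) by presburger
  have p2: "p > 2" using p(1,2) prime_ge_2_nat[OF p(1)] by (cases "p = 2") auto
  define q where "q = int p"
  have qp: "prime q" using p(1) unfolding q_def by simp
  define L where "L = Legendre 2 (int p)"
  define V where "V = (\<Sum>k\<le>h div 2. int (h choose (2*k)) * 17 ^ (h - k))"
  define T where "T = (\<Sum>k=0..n. int ((4*k) choose (2*k)) * 272 ^ (n - k))"
  have D1: "q dvd 2 ^ h * ck * 17 + 136 * V" and D2: "q dvd 17 ^ (h + 1) - 17 * e"
    using core[OF p(1,2) fs fa fb fc] unfolding h_def V_def q_def by auto
  have n17: "\<not> q dvd 17"
  proof
    assume "q dvd 17"
    then have "int p dvd int 17" unfolding q_def by simp
    then have "p dvd 17" by (simp only: of_nat_dvd_iff)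
    moreover have "prime (17::nat)" by code_simp
    ultimately have "p = 17" using p(1) primes_dvd_imp_eq by blast
    then show False using p(3) by simp
  qed
  have n2: "\<not> q dvd 2"
  proof
    assume "q dvd 2"
    then have "int p dvd int 2" unfolding q_def by simp
    then have "p dvd 2" by (simp only: of_nat_dvd_iff)
    then have "p \<le> 2" by (rule dvd_imp_le) simp
    then show False using p2 by simp
  qed
  have eu: "q dvd L - 2 ^ h"
    using euler_criterion[OF p(1) p2, of 2] unfolding L_def q_def h_def by (simp add: cong_iff_dvd_diff)
  have LL: "L * L = 1"
  proof -
    have "\<not> [2 = 0] (mod int p)" using n2 unfolding q_def by (simp add: cong_0_iff)
    then have "L = 1 \<or> L = -1" unfolding L_def Legendre_def by auto
    then show ?thesis by auto
  qed
  have X1: "q dvd 17 ^ h - e"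
  proof -
    have "17 ^ (h + 1) - 17 * e = 17 * (17 ^ h - e)" by (simp add: algebra_simps)
    then show ?thesis using D2 n17 qp prime_dvd_mult_iff by metis
  qed
  have X3: "q dvd 8 * V + L * ck"
  proof -
    have "2 ^ h * ck * 17 + 136 * V = 17 * (8 * V + 2 ^ h * ck)" by (simp add: algebra_simps)
    then have "q dvd 8 * V + 2 ^ h * ck" using D1 n17 qp prime_dvd_mult_iff by metis
    moreover have "q dvd ck * (L - 2 ^ h)" using eu by simp
    ultimately have "q dvd (8 * V + 2 ^ h * ck) + ck * (L - 2 ^ h)" by (rule dvd_add)
    moreover have "8 * V + L * ck = (8 * V + 2 ^ h * ck) + ck * (L - 2 ^ h)" by (simp add: algebra_simps)
    ultimately show ?thesis by metis
  qed
  have nle: "n \<le> h" using nh by simp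
  have W: "q dvd T * 17 ^ (h - n) - 16 ^ n * V"
  proof -
    have "T * 17 ^ (h - n) - 16 ^ n * V =
        (\<Sum>k\<le>n. int ((4*k) choose (2*k)) * 272 ^ (n - k) * 17 ^ (h - n)
                  - 16 ^ n * (int (h choose (2*k)) * 17 ^ (h - k)))"
      unfolding T_def V_def nh[symmetric] atLeast0AtMost
      by (simp add: sum_distrib_left sum_distrib_right sum_subtractf)
    also have "q dvd \<dots>"
    proof (rule dvd_sum)
      fix k assume "k \<in> {..n}"
      then have kn: "k \<le> n" by simp
      have m: "2 * k \<le> (p - 1) div 2" using kn nh h_def by linarith
      have cb: "q dvd int ((4*k) choose (2*k)) - 16 ^ k * int (h choose (2*k))"
      proof -
        have "(-4::int) ^ (2*k) = 16 ^ k" by (simp add: power_mult)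
        moreover have "2 * (2 * k) = 4 * k" by simp
        ultimately show ?thesis using cb_cong[OF p(1,2) m] unfolding q_def h_def by metis
      qed
      have e1: "(272::int) ^ (n - k) = 16 ^ (n - k) * 17 ^ (n - k)"
        by (simp add: power_mult_distrib[symmetric])
      have e2: "(17::int) ^ (n - k) * 17 ^ (h - n) = 17 ^ (h - k)"
        using kn nle by (simp add: power_add[symmetric])
      have e3: "(16::int) ^ n = 16 ^ (n - k) * 16 ^ k"
        using kn by (simp add: power_add[symmetric])
      have "int ((4*k) choose (2*k)) * 272 ^ (n - k) * 17 ^ (h - n)
                  - 16 ^ n * (int (h choose (2*k)) * 17 ^ (h - k))
          = 16 ^ (n - k) * 17 ^ (h - k) * (int ((4*k) choose (2*k)) - 16 ^ k * int (h choose (2*k)))"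
        unfolding e1 e3 e2[symmetric] by (simp add: algebra_simps)
      then show "q dvd int ((4*k) choose (2*k)) * 272 ^ (n - k) * 17 ^ (h - n)
                  - 16 ^ n * (int (h choose (2*k)) * 17 ^ (h - k))"
        using cb by simp
    qed
    finally show ?thesis .
  qed
  define A where "A = (17::int) ^ (h - n)"
  define B where "B = (16::int) ^ n"
  define C where "C = (17::int) ^ n"
  have e272: "(272::int) ^ n = B * C" unfolding B_def C_def by (simp add: power_mult_distrib[symmetric])
  have e17: "(17::int) ^ h = A * C" unfolding A_def C_def using nle by (simp add: power_add[symmetric])
  have ck: "ck = - 2 * c * e" using rel by simp
  have iden: "8*L*(T*A - B*V) + B*L*(8*V + L*ck) - 2*c*B*(A*C - e)
      = 2*A*(4*L*T - c*(B*C)) + 2*c*e*B*(1 - L*L)"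
    unfolding ck by (simp add: algebra_simps)
  have "q dvd 8*L*(T*A - B*V) + B*L*(8*V + L*ck) - 2*c*B*(A*C - e)"
  proof -
    have W': "q dvd T*A - B*V" using W unfolding A_def B_def .
    have X1': "q dvd A*C - e" using X1 unfolding e17 .
    have "q dvd 8*L*(T*A - B*V)" using W' by (rule dvd_mult)
    moreover have "q dvd B*L*(8*V + L*ck)" using X3 by (rule dvd_mult)
    moreover have "q dvd 2*c*B*(A*C - e)" using X1' by (rule dvd_mult)
    ultimately show ?thesis by (intro dvd_diff dvd_add)
  qed
  then have "q dvd 2*A*(4*L*T - c*(B*C))" unfolding iden LL by simp
  then have "q dvd 2 * A * (4*L*T - c * 272 ^ n)" unfolding e272 .
  moreover have "\<not> q dvd A" unfolding A_def using n17 qp prime_dvd_power_iff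
    by (metis prime_dvd_power)
  ultimately have "q dvd 4*L*T - c * 272 ^ n" using n2 qp prime_dvd_mult_iff by metis
  then show ?thesis unfolding q_def L_def T_def n_def by (simp add: cong_iff_dvd_diff mult.assoc)
qed


lemma class_gen:
  assumes "prime p" "odd p" "p \<noteq> 17"
    and fr: "cg p (ss ^ p) (of_int e * ss) \<and> cg p (d0 ^ p) a \<and> cg p (d1 ^ p) b"
    and fc: "cg p (2 * (a * d1 + b * d0)) (of_int ck * ss)" and rel: "- ck = 2 * c * e"
  shows "[4 * Legendre 2 (int p) * (\<Sum>k=0..p div 4. int ((4*k) choose (2*k)) * 272 ^ (p div 4 - k))
          = c * 272 ^ (p div 4)] (mod int p)"
  using main_case[OF assms(1-3) _ _ _ fc rel] fr by blast

theorem corollary2p8: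
  fixes p :: nat
  assumes "prime p" and "odd p" and "p \<noteq> 17"
  defines "S \<equiv> 4 * Legendre 2 (int p) *
                 (\<Sum>k=0..p div 4. int ((4*k) choose (2*k)) * 272 ^ (p div 4 - k))"
  shows "(p mod 17 \<in> {1, 16, 4, 13} \<longrightarrow> [S = 4 * 272 ^ (p div 4)] (mod int p)) \<and>
         (p mod 17 \<in> {2, 15, 8, 9} \<longrightarrow> [S = - 4 * 272 ^ (p div 4)] (mod int p)) \<and>
         (p mod 17 \<in> {6, 11, 7, 10} \<longrightarrow> [S = 272 ^ (p div 4)] (mod int p)) \<and>
         (p mod 17 \<in> {3, 14, 5, 12} \<longrightarrow> [S = - (272 ^ (p div 4))] (mod int p))"
proof (intro conjI impI)
  assume r: "p mod 17 \<in> {1, 16, 4, 13}"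
  have fr: "cg p (ss ^ p) (of_int 1 * ss) \<and> cg p (d0 ^ p) d0 \<and> cg p (d1 ^ p) d1"
    using r FR_1[OF assms(1,2)] FR_16[OF assms(1,2)] FR_4[OF assms(1,2)] FR_13[OF assms(1,2)] by auto
  have "[S = 4 * 272 ^ (p div 4)] (mod int p)"
    unfolding S_def by (rule class_gen[OF assms(1-3) fr E0]) simp
  then show "[S = 4 * 272 ^ (p div 4)] (mod int p)" .
next
  assume r: "p mod 17 \<in> {2, 15, 8, 9}"
  have fr: "cg p (ss ^ p) (of_int 1 * ss) \<and> cg p (d0 ^ p) (- d0) \<and> cg p (d1 ^ p) (- d1)"
    using r FR_2[OF assms(1,2)] FR_15[OF assms(1,2)] FR_8[OF assms(1,2)] FR_9[OF assms(1,2)] by auto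
  show "[S = - 4 * 272 ^ (p div 4)] (mod int p)"
    unfolding S_def by (rule class_gen[OF assms(1-3) fr E2]) simp
next
  assume r: "p mod 17 \<in> {6, 11, 7, 10}"
  have fr: "cg p (ss ^ p) (of_int (-1) * ss) \<and> cg p (d0 ^ p) (- d1) \<and> cg p (d1 ^ p) d0"
    using r FR_6[OF assms(1,2)] FR_11[OF assms(1,2)] FR_7[OF assms(1,2)] FR_10[OF assms(1,2)] by auto
  have "[S = 1 * 272 ^ (p div 4)] (mod int p)"
    unfolding S_def by (rule class_gen[OF assms(1-3) fr E3]) simp
  then show "[S = 272 ^ (p div 4)] (mod int p)" by simp
next
  assume r: "p mod 17 \<in> {3, 14, 5, 12}"
  have fr: "cg p (ss ^ p) (of_int (-1) * ss) \<and> cg p (d0 ^ p) d1 \<and> cg p (d1 ^ p) (- d0)"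
    using r FR_3[OF assms(1,2)] FR_14[OF assms(1,2)] FR_5[OF assms(1,2)] FR_12[OF assms(1,2)] by auto
  have "[S = (-1) * 272 ^ (p div 4)] (mod int p)"
    unfolding S_def by (rule class_gen[OF assms(1-3) fr E1]) simp
  then show "[S = - (272 ^ (p div 4))] (mod int p)" by simp
qed

end
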